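(* Let $\alpha>0$, let $W$ be a standard Brownian motion, and let $X$ solve $dX_t=-\alpha X_t\,dt+dW_t$, $X_0=0$. Let $X^*_t=\sup_{0\le s\le t}|X_s|$. There exists a function $\phi:\mathbb{R}_+\to\mathbb{R}_+$ satisfying $\phi(\delta)\to0$ as $\delta\to0$ such that for any $t\ge2$ and $\delta>0$, \[ \mathbb{P}\big(X^*_t\ge\delta^{-1}\log^{1/2}t\big)\le \phi(\delta). \] *)

theory Defs
  imports "HOL-Probability.Probability"
begin

definition std_brownian_motion :: "'a measure \<Rightarrow> (real \<Rightarrow> 'a \<Rightarrow> real) \<Rightarrow> bool" where
  "std_brownian_motion M W \<longleftrightarrow>
     prob_space M \<and>
     (\<forall>t\<ge>0. W t \<in> borel_measurable M) \<and>
     (\<forall>\<omega>\<in>space M. W 0 \<omega> = 0 \<and> continuous_on {0..} (\<lambda>t. W t \<omega>)) \<and>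
     (\<forall>s t. 0 \<le> s \<and> s < t \<longrightarrow>
        distributed M lborel (\<lambda>\<omega>. W t \<omega> - W s \<omega>)
          (\<lambda>x. ennreal (normal_density 0 (sqrt (t - s)) x))) \<and>
     (\<forall>ts :: real list. sorted_wrt (<) ts \<and> ts \<noteq> [] \<and> 0 \<le> hd ts \<longrightarrow>
        prob_space.indep_vars M (\<lambda>_. borel)
          (\<lambda>i \<omega>. W (ts ! Suc i) \<omega> - W (ts ! i) \<omega>) {..<length ts - 1})"

text \<open>Pathwise (strong) solution of dX = -alpha X dt + dW, X_0 = 0 (additive noise):
  continuous paths with X_t = W_t - alpha * int_0^t X_s ds.\<close>
definition ou_solution :: "'a measure \<Rightarrow> real \<Rightarrow> (real \<Rightarrow> 'a \<Rightarrow> real) \<Rightarrow> (real \<Rightarrow> 'a \<Rightarrow> real) \<Rightarrow> bool" where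
  "ou_solution M \<alpha> W X \<longleftrightarrow>
     (\<forall>\<omega>\<in>space M. continuous_on {0..} (\<lambda>t. X t \<omega>) \<and>
        (\<forall>t\<ge>0. X t \<omega> = W t \<omega> - \<alpha> * integral {0..t} (\<lambda>s. X s \<omega>)))"

end

theory Submission
  imports Defs "HOL-Real_Asymp.Real_Asymp"
begin



lemma nd_shift:
  assumes "\<sigma> > 0"
  shows "normal_density 0 \<sigma> y * exp (l*y) = exp (l^2*\<sigma>^2/2) * normal_density (l*\<sigma>^2) \<sigma> y"
proof -
  have e: "-(y - 0)\<^sup>2/ (2 * \<sigma>\<^sup>2) + l*y = l^2*\<sigma>^2/2 + (-(y - l*\<sigma>^2)\<^sup>2/ (2 * \<sigma>\<^sup>2))"
  proof -
    have s: "\<sigma>^2 \<noteq> 0" using assms by simp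
    have "(y - l*\<sigma>^2)\<^sup>2 = y\<^sup>2 - 2*l*y*\<sigma>^2 + l^2*\<sigma>^2*\<sigma>^2" by (simp add: power2_eq_square algebra_simps)
    then have "(y - l*\<sigma>^2)\<^sup>2/ (2 * \<sigma>\<^sup>2) = y\<^sup>2/ (2 * \<sigma>\<^sup>2) - l*y + l^2*\<sigma>^2/2"
      using s by (simp add: diff_divide_distrib add_divide_distrib)
    then show ?thesis by simp
  qed
  let ?k = "1 / sqrt (2 * pi * \<sigma>\<^sup>2)"
  have "normal_density 0 \<sigma> y * exp (l*y) = ?k * exp (-(y - 0)\<^sup>2/ (2 * \<sigma>\<^sup>2) + l*y)"
    unfolding normal_density_def exp_add by simp
  also have "\<dots> = ?k * exp (l^2*\<sigma>^2/2 + (-(y - l*\<sigma>^2)\<^sup>2/ (2 * \<sigma>\<^sup>2)))" by (simp only: e)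
  also have "\<dots> = exp (l^2*\<sigma>^2/2) * normal_density (l*\<sigma>^2) \<sigma> y"
    unfolding normal_density_def exp_add by simp
  finally show ?thesis .
qed

lemma gauss_tail:
  assumes P: "prob_space M" and D: "distributed M lborel Y (\<lambda>y. ennreal (normal_density 0 \<sigma> y))"
    and s: "\<sigma> > 0" and x: "x \<ge> 0"
  shows "measure M {\<omega>\<in>space M. x < \<bar>Y \<omega>\<bar>} \<le> 2 * exp (- (x\<^sup>2) / (2*\<sigma>\<^sup>2))"
proof -
  interpret prob_space M by fact
  define A where "A = {y::real. x < \<bar>y\<bar>}"
  have A: "A \<in> sets borel" unfolding A_def by measurable
  define l where "l = x / \<sigma>^2"
  have l: "l \<ge> 0" using x s by (simp add: l_def)
  define c where "c = exp (l^2*\<sigma>^2/2)"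
  let ?nd = "normal_density 0 \<sigma>"
  have "measure M {\<omega>\<in>space M. x < \<bar>Y \<omega>\<bar>} = (\<integral>\<omega>. indicator A (Y \<omega>) \<partial>M)"
  proof -
    have Ym: "Y \<in> borel_measurable M" using distributed_measurable[OF D] by simp
    have q1: "{\<omega>\<in>space M. x < \<bar>Y \<omega>\<bar>} = Y -` A \<inter> space M" by (auto simp: A_def)
    have q2: "(\<integral>\<omega>. indicator (Y -` A \<inter> space M) \<omega> \<partial>M) = (\<integral>\<omega>. indicator A (Y \<omega>) \<partial>M)"
      by (rule Bochner_Integration.integral_cong) (auto simp: indicator_def)
    have q3: "measure M (Y -` A \<inter> space M) = (\<integral>\<omega>. indicator (Y -` A \<inter> space M) \<omega> \<partial>M)"
      by (simp add: Int_assoc)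
    show ?thesis unfolding q1 q3 q2 ..
  qed
  also have "\<dots> = (\<integral>y. ?nd y * indicator A y \<partial>lborel)"
    by (rule distributed_integral[OF D, symmetric]) (use A in auto)
  also have "\<dots> \<le> (\<integral>y. exp (-l*x) * c * normal_density (l*\<sigma>^2) \<sigma> y + exp (-l*x) * c * normal_density (-l*\<sigma>^2) \<sigma> y \<partial>lborel)"
  proof (rule integral_mono)
    show "integrable lborel (\<lambda>y. ?nd y * indicator A y)"
      using A s by (intro integrable_real_mult_indicator) auto
    show "integrable lborel (\<lambda>y. exp (-l*x) * c * normal_density (l*\<sigma>^2) \<sigma> y + exp (-l*x) * c * normal_density (-l*\<sigma>^2) \<sigma> y)"
      using s by auto
    fix y :: real
    have "?nd y * indicator A y \<le> ?nd y * (exp (l*(y-x)) + exp (-l*(y+x)))"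
    proof (cases "y \<in> A")
      case True
      then have "x < y \<or> y < -x" by (auto simp: A_def)
      then have one: "1 \<le> exp (l*(y-x)) + exp (-l*(y+x))"
      proof
        assume "x < y" then have "0 \<le> l*(y-x)" using l by simp
        then have "1 \<le> exp (l*(y-x))" by simp
        then show ?thesis by (smt (verit) exp_gt_zero)
      next
        assume "y < -x" then have "0 \<le> -l*(y+x)" using l by (simp add: mult_nonneg_nonpos)
        then have "1 \<le> exp (-l*(y+x))" by simp
        then show ?thesis by (smt (verit) exp_gt_zero)
      qed
      show ?thesis using True mult_left_mono[OF one normal_density_nonneg[of 0 \<sigma> y]] by simp
    next
      case False then show ?thesis by simp
    qed
    also have "\<dots> = exp (-l*x) * (?nd y * exp (l*y)) + exp (-l*x) * (?nd y * exp ((-l)*y))"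
      by (simp add: algebra_simps exp_add[symmetric] exp_diff)
    also have "\<dots> = exp (-l*x) * c * normal_density (l*\<sigma>^2) \<sigma> y + exp (-l*x) * c * normal_density (-l*\<sigma>^2) \<sigma> y"
      using nd_shift[OF s, where l=l and y=y] nd_shift[OF s, where l="-l" and y=y] by (simp add: c_def)
    finally show "?nd y * indicator A y \<le> exp (-l*x) * c * normal_density (l*\<sigma>^2) \<sigma> y + exp (-l*x) * c * normal_density (-l*\<sigma>^2) \<sigma> y" .
  qed
  also have "\<dots> = 2 * (exp (-l*x) * c)"
    using s by (subst Bochner_Integration.integral_add) auto
  also have "exp (-l*x) * c = exp (- (x\<^sup>2) / (2*\<sigma>\<^sup>2))"
  proof -
    have s2: "\<sigma>^2 \<noteq> 0" using s by simp
    have "-l*x + l^2*\<sigma>^2/2 = - (x\<^sup>2) / (2*\<sigma>\<^sup>2)"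
      using s2 unfolding l_def by (simp add: power2_eq_square field_simps)
    then show ?thesis unfolding c_def by (simp add: exp_add[symmetric])
  qed
  finally show ?thesis .
qed



lemma decay:
  fixes X W :: "real \<Rightarrow> real"
  assumes a: "\<alpha> > 0" and cont: "continuous_on {0..} X"
    and eq: "\<forall>t\<ge>0. X t = W t - \<alpha> * integral {0..t} X"
    and i: "0 \<le> i" and bnd: "\<forall>u\<in>{i..i+1}. \<bar>W u - W i\<bar> \<le> b"
    and s: "s \<in> {i..i+1}" and c: "\<bar>c\<bar> = 1"
  shows "exp (\<alpha> * s) * (c * (X s - W s + W i) - b) \<le> exp (\<alpha> * i) * (c * X i - b)"
proof -
  define F where "F u = integral {0..u} X" for u
  define g where "g u = exp (\<alpha> * u) * (c * (W i - \<alpha> * F u) - b)" for u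
  have Z: "X u - W u + W i = W i - \<alpha> * F u" if "u \<ge> 0" for u
    using eq that unfolding F_def by auto
  have cs: "continuous_on {0..s} X" using cont by (rule continuous_on_subset) auto
  have dFw: "(F has_real_derivative X x) (at x within {0..s})" if "x \<in> {0..s}" for x
    unfolding F_def by (rule integral_has_real_derivative[OF cs that])
  have Fc: "continuous_on {0..s} F"
    using dFw by (meson DERIV_continuous continuous_on_eq_continuous_within)
  have gc: "continuous_on {i..s} g"
    unfolding g_def using Fc i by (auto intro!: continuous_intros intro: continuous_on_subset)
  have "g s \<le> g i"
  proof (rule DERIV_nonpos_imp_decreasing_open[of i s g])
    show "i \<le> s" using s by simp
    show "continuous_on {i..s} g" by fact
    fix x assume x: "i < x" "x < s"
    have dF: "(F has_real_derivative X x) (at x)"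
      using dFw[of x] x i by (simp add: at_within_Icc_at)
    have "(g has_real_derivative (\<alpha> * exp(\<alpha> * x)) * (c * (W i - \<alpha> * F x) - b) + exp(\<alpha> * x) * (c * (-\<alpha> * X x))) (at x)"
      unfolding g_def by (auto intro!: derivative_eq_intros dF)
    moreover have "(\<alpha> * exp(\<alpha> * x)) * (c * (W i - \<alpha> * F x) - b) + exp(\<alpha> * x) * (c * (-\<alpha> * X x)) \<le> 0"
    proof -
      have "X x = (W i - \<alpha> * F x) + (W x - W i)" using Z[of x] x i by simp
      then have xx: "X x = (W i - \<alpha> * F x) + (W x - W i)" .
      have "(\<alpha> * exp(\<alpha> * x)) * (c * (W i - \<alpha> * F x) - b) + exp(\<alpha> * x) * (c * (-\<alpha> * X x))
          = (\<alpha> * exp(\<alpha> * x)) * (- b - c * (W x - W i))" unfolding xx by (simp add: algebra_simps)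
      moreover have "\<bar>c * (W x - W i)\<bar> \<le> b" using bnd x s c by (auto simp: abs_mult)
      then have "- b - c * (W x - W i) \<le> 0" by linarith
      ultimately show ?thesis using a by (simp add: mult_nonneg_nonpos)
    qed
    ultimately show "\<exists>y. (g has_real_derivative y) (at x) \<and> y \<le> 0" by blast
  qed
  moreover have "g s = exp (\<alpha> * s) * (c * (X s - W s + W i) - b)"
    using Z[of s] s i unfolding g_def by simp
  moreover have "g i = exp (\<alpha> * i) * (c * X i - b)"
    using Z[of i] i unfolding g_def by simp
  ultimately show ?thesis by simp
qed

lemma step_bound:
  fixes X W :: "real \<Rightarrow> real"
  assumes a: "\<alpha> > 0" and cont: "continuous_on {0..} X"
    and eq: "\<forall>t\<ge>0. X t = W t - \<alpha> * integral {0..t} X"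
    and i: "0 \<le> i" and bnd: "\<forall>u\<in>{i..i+1}. \<bar>W u - W i\<bar> \<le> b"
    and s: "s \<in> {i..i+1}" and b: "b \<ge> 0"
  shows "\<bar>X s\<bar> \<le> 2 * b + exp (\<alpha> * i) / exp (\<alpha> * s) * \<bar>X i\<bar>"
proof -
  let ?Z = "X s - W s + W i"
  have e: "exp (\<alpha> * i) * (c * X i - b) \<le> exp (\<alpha> * i) * \<bar>X i\<bar>" if "\<bar>c\<bar> = 1" for c
  proof -
    have "c * X i - b \<le> \<bar>X i\<bar>" using that b by (auto simp: abs_if split: if_splits)
    then show ?thesis by simp
  qed
  have "exp (\<alpha> * s) * (c * ?Z - b) \<le> exp (\<alpha> * i) * \<bar>X i\<bar>" if "\<bar>c\<bar> = 1" for c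
    using decay[OF a cont eq i bnd s that] e[OF that] by linarith
  then have "c * ?Z - b \<le> exp (\<alpha> * i) / exp (\<alpha> * s) * \<bar>X i\<bar>" if "\<bar>c\<bar> = 1" for c
    using that by (simp add: pos_le_divide_eq mult.commute)
  from this[of 1] this[of "-1"] have "\<bar>?Z\<bar> \<le> b + exp (\<alpha> * i) / exp (\<alpha> * s) * \<bar>X i\<bar>" by simp
  moreover have "\<bar>W s - W i\<bar> \<le> b" using bnd s by auto
  ultimately show ?thesis by linarith
qed

lemma ou_det:
  fixes X W :: "real \<Rightarrow> real" and N :: nat
  assumes a: "\<alpha> > 0" and cont: "continuous_on {0..} X"
    and eq: "\<forall>t\<ge>0. X t = W t - \<alpha> * integral {0..t} X"
    and W0: "W 0 = 0" and b: "b \<ge> 0"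
    and bnd: "\<forall>i<N. \<forall>u\<in>{real i..real i+1}. \<bar>W u - W (real i)\<bar> \<le> b"
    and s: "s \<in> {0..real N}"
  shows "\<bar>X s\<bar> \<le> (2 + 2 / (1 - exp (- \<alpha>))) * b"
proof -
  define q where "q = exp (- \<alpha>)"
  have q: "0 < q" "q < 1" using a by (auto simp: q_def)
  define K where "K = 2 * b / (1 - q)"
  have K: "K \<ge> 0" using q b by (simp add: K_def)
  have X0: "X 0 = 0" using eq W0 by auto
  have ind: "\<bar>X (real i)\<bar> \<le> K" if "i \<le> N" for i
    using that
  proof (induction i)
    case 0 then show ?case using X0 K by simp
  next
    case (Suc i)
    then have iN: "i < N" by simp
    have "\<bar>X (real i + 1)\<bar> \<le> 2 * b + exp (\<alpha> * real i) / exp (\<alpha> * (real i + 1)) * \<bar>X (real i)\<bar>"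
      by (rule step_bound[OF a cont eq _ _ _ b]) (use bnd iN in auto)
    also have "exp (\<alpha> * real i) / exp (\<alpha> * (real i + 1)) = q"
      unfolding q_def by (simp add: exp_diff[symmetric] algebra_simps)
    also have "2 * b + q * \<bar>X (real i)\<bar> \<le> 2 * b + q * K"
      using Suc iN q by (simp add: mult_left_mono)
    also have "2 * b + q * K = K"
      using q unfolding K_def by (simp add: field_simps)
    finally show ?case by (simp add: add.commute)
  qed
  show ?thesis
  proof (cases "N = 0")
    case True
    then have "s = 0" using s by simp
    then show ?thesis using X0 b a by (simp add: K_def)
  next
    case False
    define i where "i = min (nat \<lfloor>s\<rfloor>) (N - 1)"
    have iN: "i < N" using False by (simp add: i_def)
    have si: "s \<in> {real i..real i + 1}"
    proof -
      have s0: "0 \<le> s" using s by simp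
      show ?thesis
      proof (cases "nat \<lfloor>s\<rfloor> \<le> N - 1")
        case True
        then have "i = nat \<lfloor>s\<rfloor>" by (simp add: i_def)
        then show ?thesis using s0 by (simp add: of_nat_nat)
      next
        case False
        then have "i = N - 1" by (simp add: i_def)
        moreover have "real (N - 1) \<le> s" using False s0 by (simp add: not_le) linarith
        ultimately show ?thesis using s \<open>N \<noteq> 0\<close> by (simp add: of_nat_diff)
      qed
    qed
    have "\<bar>X s\<bar> \<le> 2 * b + exp (\<alpha> * real i) / exp (\<alpha> * s) * \<bar>X (real i)\<bar>"
      by (rule step_bound[OF a cont eq _ _ si b]) (use bnd iN in auto)
    also have "exp (\<alpha> * real i) / exp (\<alpha> * s) * \<bar>X (real i)\<bar> \<le> 1 * K"
    proof (rule mult_mono)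
      show "exp (\<alpha> * real i) / exp (\<alpha> * s) \<le> 1" using si a by simp
      show "\<bar>X (real i)\<bar> \<le> K" using ind iN by simp
    qed auto
    also have "2 * b + 1 * K = (2 + 2 / (1 - exp (- \<alpha>))) * b"
      unfolding K_def q_def by (simp add: algebra_simps)
    finally show ?thesis by simp
  qed
qed



definition cw :: "nat \<Rightarrow> real" where "cw n = (1/4) * (3/4) ^ n"

lemma chain_dyadic:
  fixes f :: "real \<Rightarrow> real"
  assumes f0: "f 0 = 0" and b: "b \<ge> 0"
    and inc: "\<And>n j. j < 2 ^ n \<Longrightarrow> \<bar>f ((real j + 1) / 2 ^ n) - f (real j / 2 ^ n)\<bar> \<le> b * cw n"
  shows "k \<le> 2 ^ m \<Longrightarrow> \<bar>f (real k / 2 ^ m)\<bar> \<le> b * (1 - (3/4) ^ (m+1))"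
proof (induction m arbitrary: k)
  case 0
  then have "k = 0 \<or> k = 1" by auto
  then show ?case
  proof
    assume "k = 0" then show ?thesis using f0 b by simp
  next
    assume "k = 1"
    then show ?thesis using inc[of 0 0] f0 by (simp add: cw_def)
  qed
next
  case (Suc m)
  show ?case
  proof (cases "even k")
    case True
    then obtain j where j: "k = 2 * j" by auto
    then have jm: "j \<le> 2 ^ m" using Suc.prems by simp
    have "real k / 2 ^ Suc m = real j / 2 ^ m" using j by simp
    then have "\<bar>f (real k / 2 ^ Suc m)\<bar> \<le> b * (1 - (3/4) ^ (m+1))" using Suc.IH[OF jm] by simp
    also have "\<dots> \<le> b * (1 - (3/4) ^ (Suc m+1))"
      using b by (intro mult_left_mono) (auto simp: power_decreasing)
    finally show ?thesis .
  next
    case False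
    then obtain j where j: "k = 2 * j + 1" using oddE by blast
    then have jm: "2 * j < 2 ^ Suc m" using Suc.prems by linarith
    then have jm': "j \<le> 2 ^ m" by simp
    have e1: "real k / 2 ^ Suc m = (real (2*j) + 1) / 2 ^ Suc m" using j by simp
    have e2: "real (2*j) / 2 ^ Suc m = real j / 2 ^ m" by simp
    have "\<bar>f (real k / 2 ^ Suc m) - f (real j / 2 ^ m)\<bar> \<le> b * cw (Suc m)"
      using inc[OF jm] unfolding e1 e2 .
    moreover have "\<bar>f (real j / 2 ^ m)\<bar> \<le> b * (1 - (3/4) ^ (m+1))" using Suc.IH[OF jm'] .
    moreover have "b * cw (Suc m) + b * (1 - (3/4) ^ (m+1)) = b * (1 - (3/4) ^ (Suc m+1))"
      by (simp add: cw_def algebra_simps)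
    ultimately show ?thesis by linarith
  qed
qed

lemma chain_det:
  fixes f :: "real \<Rightarrow> real"
  assumes f0: "f 0 = 0" and b: "b \<ge> 0" and cont: "continuous_on {0..1} f"
    and inc: "\<And>n j. j < 2 ^ n \<Longrightarrow> \<bar>f ((real j + 1) / 2 ^ n) - f (real j / 2 ^ n)\<bar> \<le> b * cw n"
    and u: "u \<in> {0..1}"
  shows "\<bar>f u\<bar> \<le> b"
proof (rule ccontr)
  assume "\<not> \<bar>f u\<bar> \<le> b"
  then have e: "\<bar>f u\<bar> - b > 0" by simp
  obtain d where d: "d > 0" and hd: "\<And>v. v \<in> {0..1} \<Longrightarrow> dist v u < d \<Longrightarrow> dist (f v) (f u) < \<bar>f u\<bar> - b"
    using cont u e unfolding continuous_on_iff by metis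
  obtain m :: nat where m: "(1/2) ^ m < d" using real_arch_pow_inv[OF d, of "1/2"] by auto
  define k where "k = nat \<lfloor>u * 2 ^ m\<rfloor>"
  have u0: "0 \<le> u * 2 ^ m" using u by simp
  have kr: "real k = of_int \<lfloor>u * 2 ^ m\<rfloor>" unfolding k_def using u0 by simp
  have k1: "real k \<le> u * 2 ^ m" "u * 2 ^ m < real k + 1" unfolding kr by linarith+
  have "u * 2 ^ m \<le> 2 ^ m" using u by simp
  then have kle: "k \<le> 2 ^ m" using k1 by (metis of_nat_le_iff of_nat_numeral of_nat_power order_trans)
  define v where "v = real k / 2 ^ m"
  have v01: "v \<in> {0..1}" using kle unfolding v_def by (auto simp: field_simps)
  have "dist v u < d"
  proof -
    have uv: "u - v = (u * 2 ^ m - real k) / 2 ^ m" unfolding v_def by (simp add: field_simps)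
    have "v \<le> u" using k1 unfolding v_def by (simp add: divide_le_eq)
    moreover have "u - v < 1 / 2 ^ m" unfolding uv using k1 by (intro divide_strict_right_mono) auto
    ultimately have "dist v u < 1 / 2 ^ m" by (simp add: dist_real_def)
    then show ?thesis using m by (simp add: power_one_over)
  qed
  then have "dist (f v) (f u) < \<bar>f u\<bar> - b" using hd v01 by blast
  moreover have "\<bar>f v\<bar> \<le> b * (1 - (3/4) ^ (m+1))" unfolding v_def by (rule chain_dyadic[OF f0 b inc kle])
  moreover have "b * (1 - (3/4) ^ (m+1)) \<le> b" using b by (simp add: mult_left_le)
  ultimately show False by (simp add: dist_real_def)
qed



lemma term_bound:
  fixes a :: real
  assumes a: "a \<ge> 8 * ln 4"
  shows "2 ^ n * (2 * exp (- (a * (9/8) ^ n))) \<le> 2 * exp (- a) * (1/2) ^ n"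
proof -
  have a0: "a \<ge> 0" using a by (smt (verit) ln_ge_zero)
  have bern: "1 + real n * (1/8) \<le> (1 + 1/8 :: real) ^ n" by (rule Bernoulli_inequality) simp
  have "a * (1 + real n * (1/8)) \<le> a * (9/8) ^ n" using bern a0 by (intro mult_left_mono) auto
  then have "exp (- (a * (9/8) ^ n)) \<le> exp (- a - real n * (a / 8))" by (simp add: algebra_simps)
  also have "\<dots> = exp (- a) * exp (- (a/8)) ^ n"
  proof -
    have "exp (- (a/8)) ^ n = exp (real n * (- (a/8)))" by (rule exp_of_nat_mult[symmetric])
    then show ?thesis by (simp add: exp_add[symmetric])
  qed
  also have "\<dots> \<le> exp (- a) * (1/4) ^ n"
  proof -
    have "exp (- (a/8)) \<le> exp (- ln 4)" using a by simp
    also have "exp (- ln 4) = (1/4::real)" by (simp add: exp_minus)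
    finally show ?thesis by (intro mult_left_mono power_mono) auto
  qed
  finally have "2 ^ n * (2 * exp (- (a * (9/8) ^ n))) \<le> 2 ^ n * (2 * (exp (- a) * (1/4) ^ n))"
    by (intro mult_left_mono) auto
  also have "\<dots> = 2 * exp (- a) * (2 * (1/4)) ^ n" by (simp only: power_mult_distrib) (simp add: algebra_simps)
  finally show ?thesis by simp
qed



lemma single_bound:
  assumes BM: "std_brownian_motion M W" and b: "b > 0" and i: "0 \<le> (i::real)"
  shows "{\<omega>\<in>space M. b * cw n < \<bar>W (i + (real j + 1) / 2 ^ n) \<omega> - W (i + real j / 2 ^ n) \<omega>\<bar>} \<in> sets M"
    and "measure M {\<omega>\<in>space M. b * cw n < \<bar>W (i + (real j + 1) / 2 ^ n) \<omega> - W (i + real j / 2 ^ n) \<omega>\<bar>}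
           \<le> 2 * exp (- (b^2 / 32 * (9/8) ^ n))"
proof -
  define s where "s = i + real j / 2 ^ n"
  define t where "t = i + (real j + 1) / 2 ^ n"
  have ts: "t - s = 1 / 2 ^ n" unfolding s_def t_def by (simp add: field_simps)
  have s0: "0 \<le> s" using i unfolding s_def by simp
  have "0 < t - s" unfolding ts by simp
  then have st: "s < t" by simp
  have P: "prob_space M" using BM unfolding std_brownian_motion_def by simp
  have D: "distributed M lborel (\<lambda>\<omega>. W t \<omega> - W s \<omega>) (\<lambda>x. ennreal (normal_density 0 (sqrt (t - s)) x))"
    using BM s0 st unfolding std_brownian_motion_def by blast
  have Wm: "W t \<in> borel_measurable M" "W s \<in> borel_measurable M"
    using BM s0 st unfolding std_brownian_motion_def by auto
  show "{\<omega>\<in>space M. b * cw n < \<bar>W (i + (real j + 1) / 2 ^ n) \<omega> - W (i + real j / 2 ^ n) \<omega>\<bar>} \<in> sets M"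
    using Wm unfolding s_def t_def by measurable
  have sq: "sqrt (t - s) > 0" using st by simp
  have "measure M {\<omega>\<in>space M. b * cw n < \<bar>W t \<omega> - W s \<omega>\<bar>} \<le> 2 * exp (- ((b * cw n)\<^sup>2) / (2 * (sqrt (t - s))\<^sup>2))"
    by (rule gauss_tail[OF P D sq]) (use b in \<open>simp add: cw_def\<close>)
  also have "- ((b * cw n)\<^sup>2) / (2 * (sqrt (t - s))\<^sup>2) = - (b^2 / 32 * (9/8) ^ n)"
  proof -
    have "(sqrt (t - s))\<^sup>2 = 1 / 2 ^ n" using st ts by simp
    moreover have "(cw n)\<^sup>2 * 2 ^ n = (1/16) * (9/8) ^ n"
      unfolding cw_def by (simp add: power_mult_distrib power2_eq_square power_mult[symmetric] 
          mult.assoc[symmetric] power_mult_distrib[symmetric])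
    ultimately show ?thesis
    proof -
      assume q1: "(sqrt (t - s))\<^sup>2 = 1 / 2 ^ n" and q2: "(cw n)\<^sup>2 * 2 ^ n = (1/16) * (9/8) ^ n"
      have "- ((b * cw n)\<^sup>2) / (2 * (sqrt (t - s))\<^sup>2) = - (b\<^sup>2 * ((cw n)\<^sup>2 * 2 ^ n) / 2)"
        unfolding q1 by (simp add: power_mult_distrib)
      also have "\<dots> = - (b^2 / 32 * (9/8) ^ n)" unfolding q2 by simp
      finally show ?thesis .
    qed
  qed
  finally show "measure M {\<omega>\<in>space M. b * cw n < \<bar>W (i + (real j + 1) / 2 ^ n) \<omega> - W (i + real j / 2 ^ n) \<omega>\<bar>}
           \<le> 2 * exp (- (b^2 / 32 * (9/8) ^ n))" unfolding s_def t_def .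
qed

lemma bad_bound:
  fixes N :: nat
  assumes BM: "std_brownian_motion M W" and b: "b > 0" and a8: "b^2 / 32 \<ge> 8 * ln 4"
  defines "S \<equiv> \<lambda>n i j. {\<omega>\<in>space M. b * cw n < \<bar>W (real i + (real j + 1) / 2 ^ n) \<omega> - W (real i + real j / 2 ^ n) \<omega>\<bar>}"
  defines "B \<equiv> \<lambda>n. \<Union>i<N. \<Union>j<2^n. S n i j"
  shows "(\<Union>n. B n) \<in> sets M" and "measure M (\<Union>n. B n) \<le> real N * (4 * exp (- (b^2 / 32)))"
proof -
  interpret prob_space M using BM unfolding std_brownian_motion_def by simp
  define a where "a = b^2 / 32"
  have Sm: "S n i j \<in> sets M" for n i j
    unfolding S_def by (rule single_bound(1)[OF BM b]) simp
  have mS: "measure M (S n i j) \<le> 2 * exp (- (a * (9/8) ^ n))" for n i j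
    unfolding S_def a_def by (rule single_bound(2)[OF BM b]) simp
  have Bm: "B n \<in> sets M" for n unfolding B_def using Sm by auto
  show "(\<Union>n. B n) \<in> sets M" using Bm by auto
  have mB: "measure M (B n) \<le> real N * (2 * exp (- a) * (1/2) ^ n)" for n
  proof -
    have "measure M (B n) \<le> (\<Sum>i<N. measure M (\<Union>j<2^n. S n i j))"
      unfolding B_def by (rule measure_UNION_le) (use Sm in auto)
    also have "\<dots> \<le> (\<Sum>i<N. (\<Sum>j<(2::nat)^n. measure M (S n i j)))"
      by (intro sum_mono measure_UNION_le) (use Sm in auto)
    also have "\<dots> \<le> (\<Sum>i<N. (\<Sum>j<(2::nat)^n. 2 * exp (- (a * (9/8) ^ n))))"
      by (intro sum_mono mS)
    also have "\<dots> = real N * (2 ^ n * (2 * exp (- (a * (9/8) ^ n))))" by simp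
    also have "\<dots> \<le> real N * (2 * exp (- a) * (1/2) ^ n)"
      by (intro mult_left_mono term_bound) (use a8 in \<open>auto simp: a_def\<close>)
    finally show ?thesis .
  qed
  have sg: "summable (\<lambda>n. real N * (2 * exp (- a) * (1/2::real) ^ n))"
    by (intro summable_mult summable_geometric) simp
  have sB: "summable (\<lambda>n. measure M (B n))"
    by (rule summable_comparison_test[OF _ sg]) (use mB in auto)
  have "measure M (\<Union>n. B n) \<le> (\<Sum>n. measure M (B n))"
    by (rule finite_measure_subadditive_countably) (use Bm sB in auto)
  also have "\<dots> \<le> (\<Sum>n. real N * (2 * exp (- a) * (1/2::real) ^ n))"
    by (rule suminf_le[OF mB sB sg])
  also have "\<dots> = real N * (2 * exp (- a) * (\<Sum>n. (1/2::real) ^ n))"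
    by (simp add: suminf_mult summable_geometric)
  also have "\<dots> = real N * (4 * exp (- (b^2 / 32)))"
    by (simp add: suminf_geometric a_def)
  finally show "measure M (\<Union>n. B n) \<le> real N * (4 * exp (- (b^2 / 32)))" .
qed



theorem lemma3p2:
  fixes M :: "'a measure" and \<alpha> :: real and W X :: "real \<Rightarrow> 'a \<Rightarrow> real"
  assumes "\<alpha> > 0"
    and "std_brownian_motion M W"
    and "ou_solution M \<alpha> W X"
  shows "\<exists>\<phi> :: real \<Rightarrow> real. (\<forall>\<delta>\<ge>0. \<phi> \<delta> \<ge> 0) \<and> (\<phi> \<longlongrightarrow> 0) (at_right 0) \<and>
           (\<forall>t\<ge>2. \<forall>\<delta>>0.
              measure M {\<omega>\<in>space M. (SUP s\<in>{0..t}. \<bar>X s \<omega>\<bar>) \<ge> sqrt (ln t) / \<delta>} \<le> \<phi> \<delta>)"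
proof -
  note a = assms(1) and BM = assms(2) and OU = assms(3)
  interpret prob_space M using BM unfolding std_brownian_motion_def by simp
  define C where "C = 2 + 2 / (1 - exp (- \<alpha>))"
  have C: "C \<ge> 2" using a unfolding C_def by simp
  define \<kappa> where "\<kappa> = 1 / (128 * C\<^sup>2)"
  have \<kappa>: "\<kappa> > 0" using C unfolding \<kappa>_def by simp
  define K2 where "K2 = ln 2 / (128 * C\<^sup>2)"
  have K2: "K2 > 0" using C unfolding K2_def by simp
  define cond where "cond \<delta> \<longleftrightarrow> \<delta> > 0 \<and> 1 \<le> \<kappa> / \<delta>\<^sup>2 \<and> 8 * ln 4 \<le> K2 / \<delta>\<^sup>2" for \<delta> :: real
  define \<phi> where "\<phi> \<delta> = (if cond \<delta> then 8 * exp (ln 2 * (1 - \<kappa> / \<delta>\<^sup>2)) else 1)" for \<delta>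
  have ev: "eventually cond (at_right 0)"
  proof -
    have "eventually (\<lambda>\<delta>. 1 \<le> \<kappa> / \<delta>\<^sup>2) (at_right (0::real))" using \<kappa> by real_asymp
    moreover have "eventually (\<lambda>\<delta>. 8 * ln 4 \<le> K2 / \<delta>\<^sup>2) (at_right (0::real))" using K2 by real_asymp
    moreover have "eventually (\<lambda>\<delta>. \<delta> > 0) (at_right (0::real))" by (simp add: eventually_at_right_less)
    ultimately show ?thesis unfolding cond_def by eventually_elim auto
  qed
  have lim: "(\<phi> \<longlongrightarrow> 0) (at_right 0)"
  proof -
    have "((\<lambda>\<delta>. 8 * exp (ln 2 * (1 - \<kappa> / \<delta>\<^sup>2))) \<longlongrightarrow> 0) (at_right 0)" using \<kappa> by real_asymp
    moreover have "eventually (\<lambda>\<delta>. 8 * exp (ln 2 * (1 - \<kappa> / \<delta>\<^sup>2)) = \<phi> \<delta>) (at_right 0)"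
      using ev by eventually_elim (simp add: \<phi>_def)
    ultimately show ?thesis by (rule Lim_transform_eventually)
  qed
  have bound: "measure M {\<omega>\<in>space M. (SUP s\<in>{0..t}. \<bar>X s \<omega>\<bar>) \<ge> sqrt (ln t) / \<delta>} \<le> \<phi> \<delta>"
    if t: "t \<ge> 2" and d: "\<delta> > 0" for t \<delta>
  proof (cases "cond \<delta>")
    case False
    then show ?thesis unfolding \<phi>_def by (simp add: measure_le_1)
  next
    case True
    then have c1: "1 \<le> \<kappa> / \<delta>\<^sup>2" and c2: "8 * ln 4 \<le> K2 / \<delta>\<^sup>2" unfolding cond_def by auto
    define L where "L = sqrt (ln t) / \<delta>"
    define b where "b = L / (2 * C)"
    define N where "N = nat \<lceil>t\<rceil>"
    have lnt: "ln t \<ge> ln 2" using t by simp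
    have lnt0: "ln t > 0" using t by simp
    have L: "L > 0" using lnt0 d unfolding L_def by simp
    have b: "b > 0" using L C unfolding b_def by simp
    have b2: "b^2 / 32 = ln t * (\<kappa> / \<delta>\<^sup>2)"
      using lnt0 C d unfolding b_def L_def \<kappa>_def by (simp add: power_divide power_mult_distrib field_simps)
    have b2': "b^2 / 32 \<ge> 8 * ln 4"
    proof -
      have "K2 / \<delta>\<^sup>2 \<le> ln t * (\<kappa> / \<delta>\<^sup>2)"
        unfolding K2_def \<kappa>_def using lnt C by (simp add: divide_right_mono field_simps)
      then show ?thesis using c2 b2 by linarith
    qed
    define S where "S = (\<lambda>n i j. {\<omega>\<in>space M. b * cw n < \<bar>W (real i + (real j + 1) / 2 ^ n) \<omega> - W (real i + real j / 2 ^ n) \<omega>\<bar>})"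
    define B where "B = (\<lambda>n. \<Union>i<N. \<Union>j<2^n. S n i j)"
    have Bm: "(\<Union>n. B n) \<in> sets M" and mB: "measure M (\<Union>n. B n) \<le> real N * (4 * exp (- (b^2 / 32)))"
      using bad_bound[OF BM b b2', of N] unfolding S_def B_def by auto
    have sub: "{\<omega>\<in>space M. (SUP s\<in>{0..t}. \<bar>X s \<omega>\<bar>) \<ge> sqrt (ln t) / \<delta>} \<subseteq> (\<Union>n. B n)"
    proof
      fix \<omega> assume \<omega>: "\<omega> \<in> {\<omega>\<in>space M. (SUP s\<in>{0..t}. \<bar>X s \<omega>\<bar>) \<ge> sqrt (ln t) / \<delta>}"
      show "\<omega> \<in> (\<Union>n. B n)"
      proof (rule ccontr)
        assume nB: "\<omega> \<notin> (\<Union>n. B n)"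
        have sp: "\<omega> \<in> space M" using \<omega> by simp
        have Wc: "continuous_on {0..} (\<lambda>t. W t \<omega>)" and W0: "W 0 \<omega> = 0"
          using BM sp unfolding std_brownian_motion_def by auto
        have Xc: "continuous_on {0..} (\<lambda>t. X t \<omega>)" and Xe: "\<forall>t\<ge>0. X t \<omega> = W t \<omega> - \<alpha> * integral {0..t} (\<lambda>s. X s \<omega>)"
          using OU sp unfolding ou_solution_def by auto
        have incs: "\<bar>W (real i + (real j + 1) / 2 ^ n) \<omega> - W (real i + real j / 2 ^ n) \<omega>\<bar> \<le> b * cw n"
          if "i < N" "j < 2 ^ n" for i j n
          using nB sp that unfolding B_def S_def by (auto simp: not_less)
        have Wb: "\<forall>i<N. \<forall>u\<in>{real i..real i+1}. \<bar>W u \<omega> - W (real i) \<omega>\<bar> \<le> b"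
        proof (intro allI impI ballI)
          fix i u assume i: "i < N" and u: "u \<in> {real i..real i+1}"
          define f where "f v = W (real i + v) \<omega> - W (real i) \<omega>" for v
          have fc: "continuous_on {0..1} f"
            unfolding f_def
            by (intro continuous_intros continuous_on_compose2[OF Wc]) auto
          have "\<bar>f (u - real i)\<bar> \<le> b"
          proof (rule chain_det[where f = f])
            show "f 0 = 0" by (simp add: f_def)
            show "0 \<le> b" using b by simp
            show "continuous_on {0..1} f" by fact
            show "u - real i \<in> {0..1}" using u by simp
            fix n j :: nat assume "j < 2 ^ n"
            then show "\<bar>f ((real j + 1) / 2 ^ n) - f (real j / 2 ^ n)\<bar> \<le> b * cw n"
              using incs[OF i] unfolding f_def by simp
          qed
          then show "\<bar>W u \<omega> - W (real i) \<omega>\<bar> \<le> b" by (simp add: f_def)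
        qed
        have Xb: "\<bar>X s \<omega>\<bar> \<le> L / 2" if s: "s \<in> {0..t}" for s
        proof -
          have "s \<in> {0..real N}" using s t unfolding N_def by (simp add: of_nat_nat) (meson le_of_int_ceiling order_trans)
          then have "\<bar>X s \<omega>\<bar> \<le> (2 + 2 / (1 - exp (- \<alpha>))) * b"
            by (intro ou_det[where X = "\<lambda>t. X t \<omega>" and W = "\<lambda>t. W t \<omega>" and N = N, OF a Xc Xe W0]) (use b Wb in auto)
          also have "\<dots> = L / 2" unfolding C_def[symmetric] b_def using C by simp
          finally show ?thesis .
        qed
        have "(SUP s\<in>{0..t}. \<bar>X s \<omega>\<bar>) \<le> L / 2"
          by (rule cSUP_least) (use t Xb in auto)
        moreover have "(SUP s\<in>{0..t}. \<bar>X s \<omega>\<bar>) \<ge> L" using \<omega> unfolding L_def by simp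
        ultimately show False using L by simp
      qed
    qed
    have "measure M {\<omega>\<in>space M. (SUP s\<in>{0..t}. \<bar>X s \<omega>\<bar>) \<ge> sqrt (ln t) / \<delta>} \<le> measure M (\<Union>n. B n)"
      by (rule finite_measure_mono[OF sub Bm])
    also have "\<dots> \<le> real N * (4 * exp (- (b^2 / 32)))" by (rule mB)
    also have "\<dots> \<le> (2 * t) * (4 * exp (- (b^2 / 32)))"
    proof (rule mult_right_mono)
      have "real N \<le> t + 1" unfolding N_def using t by linarith
      then show "real N \<le> 2 * t" using t by simp
    qed simp
    also have "\<dots> = 8 * exp (ln t * (1 - \<kappa> / \<delta>\<^sup>2))"
      unfolding b2 using t by (simp add: algebra_simps exp_diff exp_ln exp_minus divide_inverse)
    also have "\<dots> \<le> 8 * exp (ln 2 * (1 - \<kappa> / \<delta>\<^sup>2))"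
      using lnt c1 by (simp add: mult_right_mono_neg)
    also have "\<dots> = \<phi> \<delta>" using True by (simp add: \<phi>_def)
    finally show ?thesis .
  qed
  have "\<forall>\<delta>\<ge>0. \<phi> \<delta> \<ge> 0" by (simp add: \<phi>_def)
  then show ?thesis using lim bound by blast
qed

end
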